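(* Let $K$ be an algebraically closed field of characteristic zero, $\Phi=(f_1,\dots,f_n)$ a polynomial automorphism of $K^n$ with jacobian $\lambda\in K^*$, and $\Phi^{-1}=(g_1,\dots,g_n)$. For $i=1,\dots,n$ define derivations $\delta_i(P)=\lambda^{-1}\frac{\partial P}{\partial x_i}$ and $\Delta_i(P)=\mathrm{j}(g_1,\dots,g_{i-1},P,g_{i+1},\dots,g_n)$ on $K[x_1,\dots,x_n]$. Then for every $i$ and every $P$, $\Delta_i(P\circ\Phi^{-1})=\delta_i(P)\circ\Phi^{-1}$ and $\Delta_i(P)\circ\Phi=\delta_i(P\circ\Phi)$. Moreover every $\Delta_i$ is locally nilpotent.
   Context: $\mathrm{j}(P_1,\dots,P_n)=\det(\partial P_i/\partial x_j)_{1\le i,j\le n}$ is the jacobian determinant. *)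

theory Defs
  imports "HOL-Library.Poly_Mapping" "HOL-Combinatorics.Permutations"
          "HOL-Computational_Algebra.Polynomial"
begin

text \<open>Multivariate polynomials over 'a in the variables x_0, x_1, ... :
  finitely supported maps from monomials (exponent vectors) to coefficients.
  The paper's x_1..x_n are our x_0..x_(n-1).\<close>
type_synonym 'a mpoly = "(nat \<Rightarrow>\<^sub>0 nat) \<Rightarrow>\<^sub>0 'a"

definition mConst :: "'a::zero \<Rightarrow> 'a mpoly" where
  "mConst c = Poly_Mapping.single 0 c"

definition mVar :: "nat \<Rightarrow> 'a::{zero,one} mpoly" where
  "mVar i = Poly_Mapping.single (Poly_Mapping.single i 1) 1"

definition in_ring :: "nat \<Rightarrow> 'a::zero mpoly \<Rightarrow> bool" where
  "in_ring n p \<longleftrightarrow> (\<forall>m\<in>Poly_Mapping.keys p. Poly_Mapping.keys m \<subseteq> {..<n})"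

definition mpderiv :: "nat \<Rightarrow> 'a::comm_ring_1 mpoly \<Rightarrow> 'a mpoly" where
  "mpderiv i p = (\<Sum>m\<in>Poly_Mapping.keys p.
      Poly_Mapping.single (m - Poly_Mapping.single i 1)
        (of_nat (Poly_Mapping.lookup m i) * Poly_Mapping.lookup p m))"

definition msubst :: "(nat \<Rightarrow> 'a::comm_ring_1 mpoly) \<Rightarrow> 'a mpoly \<Rightarrow> 'a mpoly" where
  "msubst s p = (\<Sum>m\<in>Poly_Mapping.keys p.
      mConst (Poly_Mapping.lookup p m) *
      (\<Prod>v\<in>Poly_Mapping.keys m. s v ^ Poly_Mapping.lookup m v))"

definition mdet :: "nat \<Rightarrow> (nat \<Rightarrow> nat \<Rightarrow> 'a::comm_ring_1) \<Rightarrow> 'a" where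
  "mdet n M = (\<Sum>\<pi> | \<pi> permutes {..<n}. of_int (sign \<pi>) * (\<Prod>i<n. M i (\<pi> i)))"

definition jac :: "nat \<Rightarrow> (nat \<Rightarrow> 'a::comm_ring_1 mpoly) \<Rightarrow> 'a mpoly" where
  "jac n F = mdet n (\<lambda>i j. mpderiv j (F i))"

definition poly_aut_inv :: "nat \<Rightarrow> (nat \<Rightarrow> 'a::comm_ring_1 mpoly) \<Rightarrow> (nat \<Rightarrow> 'a mpoly) \<Rightarrow> bool" where
  "poly_aut_inv n F G \<longleftrightarrow>
     (\<forall>i<n. in_ring n (F i) \<and> in_ring n (G i)) \<and>
     (\<forall>i<n. msubst F (G i) = mVar i) \<and>
     (\<forall>i<n. msubst G (F i) = mVar i)"

definition alg_closed :: "'a::field itself \<Rightarrow> bool" where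
  "alg_closed _ \<longleftrightarrow> (\<forall>p::'a poly. Polynomial.degree p > 0 \<longrightarrow> (\<exists>x. poly p x = 0))"

end

theory Submission
  imports Defs "Jordan_Normal_Form.Determinant"
begin

lemma pm_expand: "(p::'a \<Rightarrow>\<^sub>0 'b::comm_monoid_add) = (\<Sum>m\<in>Poly_Mapping.keys p. Poly_Mapping.single m (Poly_Mapping.lookup p m))"
proof (rule poly_mapping_eqI)
  fix k
  have "Poly_Mapping.lookup (\<Sum>m\<in>Poly_Mapping.keys p. Poly_Mapping.single m (Poly_Mapping.lookup p m)) k
     = (\<Sum>m\<in>Poly_Mapping.keys p. if m = k then Poly_Mapping.lookup p m else 0)"
    by (simp add: lookup_sum lookup_single when_def)
  also have "\<dots> = Poly_Mapping.lookup p k"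
    by (simp add: in_keys_iff)
  finally show "Poly_Mapping.lookup p k = Poly_Mapping.lookup (\<Sum>m\<in>Poly_Mapping.keys p. Poly_Mapping.single m (Poly_Mapping.lookup p m)) k" by simp
qed

lemma pm_induct[case_names zero add]:
  fixes p :: "'a \<Rightarrow>\<^sub>0 'b::comm_monoid_add"
  assumes z: "Q 0"
    and s: "\<And>m a p. a \<noteq> 0 \<Longrightarrow> m \<notin> Poly_Mapping.keys p \<Longrightarrow> Q p \<Longrightarrow> Q (Poly_Mapping.single m a + p)"
  shows "Q p"
proof -
  have "\<And>A. finite A \<Longrightarrow> A \<subseteq> Poly_Mapping.keys p \<Longrightarrow> Q (\<Sum>m\<in>A. Poly_Mapping.single m (Poly_Mapping.lookup p m))"
  proof -
    fix A :: "'a set" assume "finite A" "A \<subseteq> Poly_Mapping.keys p"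
    then show "Q (\<Sum>m\<in>A. Poly_Mapping.single m (Poly_Mapping.lookup p m))"
    proof (induction A rule: finite_induct)
      case empty then show ?case using z by simp
    next
      case (insert x F)
      have k: "Poly_Mapping.keys (\<Sum>m\<in>F. Poly_Mapping.single m (Poly_Mapping.lookup p m)) \<subseteq> F"
        using keys_sum[of "\<lambda>m. Poly_Mapping.single m (Poly_Mapping.lookup p m)" F] by auto
      have "Q (Poly_Mapping.single x (Poly_Mapping.lookup p x) + (\<Sum>m\<in>F. Poly_Mapping.single m (Poly_Mapping.lookup p m)))"
        apply (rule s)
        using insert k by (auto simp: in_keys_iff)
      then show ?case using insert by simp
    qed
  qed
  then show ?thesis using pm_expand[of p] by (metis finite_keys order_refl)
qed

lemma keys_single_sub: "Poly_Mapping.keys (Poly_Mapping.single m a) \<subseteq> {m}"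
  by simp

lemma mConst_0[simp]: "mConst 0 = 0" by (simp add: mConst_def)
lemma mConst_1[simp]: "mConst 1 = 1" by (simp add: mConst_def)
lemma mConst_add: "mConst (a + b) = mConst a + mConst b" by (simp add: mConst_def single_add)
lemma mConst_mult: "mConst (a * b) = mConst a * (mConst b :: 'a::comm_ring_1 mpoly)"
  by (simp add: mConst_def mult_single)
lemma mConst_single: "mConst a * Poly_Mapping.single m (b::'a::comm_ring_1) = Poly_Mapping.single m (a * b)"
  by (simp add: mConst_def mult_single)

lemma mpderiv_superset:
  assumes "finite S" "Poly_Mapping.keys p \<subseteq> S"
  shows "mpderiv i p = (\<Sum>m\<in>S. Poly_Mapping.single (m - Poly_Mapping.single i 1)
        (of_nat (Poly_Mapping.lookup m i) * Poly_Mapping.lookup p m))"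
  unfolding mpderiv_def
  by (rule sum.mono_neutral_left) (use assms in \<open>auto simp: in_keys_iff\<close>)

lemma mpderiv_add: "mpderiv i (p + q) = mpderiv i p + mpderiv i q"
proof -
  let ?S = "Poly_Mapping.keys p \<union> Poly_Mapping.keys q \<union> Poly_Mapping.keys (p+q)"
  have f: "finite ?S" by simp
  show ?thesis
    apply (subst (1 2 3) mpderiv_superset[OF f])
    by (auto simp: lookup_add distrib_left single_add sum.distrib)
qed

lemma mpderiv_zero[simp]: "mpderiv i 0 = 0" by (simp add: mpderiv_def)

interpretation mpderiv_hom: comm_monoid_add_hom "mpderiv i"
  by unfold_locales (auto simp: mpderiv_add)

lemma mpderiv_single: "mpderiv i (Poly_Mapping.single m a) =
   Poly_Mapping.single (m - Poly_Mapping.single i 1) (of_nat (Poly_Mapping.lookup m i) * a)"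
  by (subst mpderiv_superset[of "{m}"]) auto

lemma mpderiv_single_mult:
  "mpderiv i (Poly_Mapping.single m a * Poly_Mapping.single m' b) =
   mpderiv i (Poly_Mapping.single m a) * Poly_Mapping.single m' b
   + Poly_Mapping.single m a * mpderiv i (Poly_Mapping.single m' (b::'a::comm_ring_1))"
proof -
  let ?e = "Poly_Mapping.single i (1::nat)"
  have L: "mpderiv i (Poly_Mapping.single m a * Poly_Mapping.single m' b) =
     Poly_Mapping.single (m + m' - ?e) (of_nat (Poly_Mapping.lookup m i) * (a*b))
     + Poly_Mapping.single (m + m' - ?e) (of_nat (Poly_Mapping.lookup m' i) * (a*b))"
    by (simp add: mult_single mpderiv_single lookup_add single_add[symmetric] algebra_simps)
  have 1: "mpderiv i (Poly_Mapping.single m a) * Poly_Mapping.single m' b =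
     Poly_Mapping.single (m + m' - ?e) (of_nat (Poly_Mapping.lookup m i) * (a*b))"
  proof (cases "Poly_Mapping.lookup m i = 0")
    case True then show ?thesis by (simp add: mpderiv_single)
  next
    case False
    have "m - ?e + m' = m + m' - ?e"
      by (rule poly_mapping_eqI) (use False in \<open>auto simp: lookup_add lookup_minus lookup_single when_def\<close>)
    then show ?thesis by (simp add: mpderiv_single mult_single algebra_simps)
  qed
  have 2: "Poly_Mapping.single m a * mpderiv i (Poly_Mapping.single m' b) =
     Poly_Mapping.single (m + m' - ?e) (of_nat (Poly_Mapping.lookup m' i) * (a*b))"
  proof (cases "Poly_Mapping.lookup m' i = 0")
    case True then show ?thesis by (simp add: mpderiv_single)
  next
    case False
    have "m + (m' - ?e) = m + m' - ?e"
      by (rule poly_mapping_eqI) (use False in \<open>auto simp: lookup_add lookup_minus lookup_single when_def\<close>)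
    then show ?thesis by (simp add: mpderiv_single mult_single algebra_simps)
  qed
  show ?thesis using L 1 2 by simp
qed

lemma mpderiv_mult: "mpderiv i (p * q) = mpderiv i p * q + p * mpderiv i (q::'a::comm_ring_1 mpoly)"
proof (induction p rule: pm_induct)
  case zero then show ?case by simp
next
  case (add m a p)
  have "mpderiv i (Poly_Mapping.single m a * q) = mpderiv i (Poly_Mapping.single m a) * q
      + Poly_Mapping.single m a * mpderiv i q"
  proof (induction q rule: pm_induct)
    case zero then show ?case by simp
  next
    case (add m' b q)
    then show ?case
      by (simp add: distrib_left distrib_right mpderiv_add mpderiv_single_mult algebra_simps)
  qed
  then show ?case using add
    by (simp add: distrib_left distrib_right mpderiv_add algebra_simps)
qed

lemma mpderiv_mConst[simp]: "mpderiv i (mConst c) = 0"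
  by (simp add: mConst_def mpderiv_single)

lemma mpderiv_mConst_mult: "mpderiv i (mConst c * p) = mConst c * mpderiv i p"
  by (simp add: mpderiv_mult)

lemma mpderiv_mVar: "mpderiv j (mVar i) = (if i = j then 1 else 0)"
  by (auto simp: mVar_def mpderiv_single lookup_single when_def)

definition mon :: "(nat \<Rightarrow> 'a::comm_ring_1 mpoly) \<Rightarrow> (nat \<Rightarrow>\<^sub>0 nat) \<Rightarrow> 'a mpoly" where
  "mon s m = (\<Prod>v\<in>Poly_Mapping.keys m. s v ^ Poly_Mapping.lookup m v)"

lemma mon_superset: "finite V \<Longrightarrow> Poly_Mapping.keys m \<subseteq> V \<Longrightarrow> mon s m = (\<Prod>v\<in>V. s v ^ Poly_Mapping.lookup m v)"
  unfolding mon_def by (rule prod.mono_neutral_left) (auto simp: in_keys_iff)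

lemma mon_add: "mon s (m + m') = mon s m * mon s m'"
proof -
  let ?V = "Poly_Mapping.keys m \<union> Poly_Mapping.keys m'"
  have f: "finite ?V" by simp
  have k: "Poly_Mapping.keys (m + m') \<subseteq> ?V" by (rule keys_add)
  show ?thesis
    by (subst (1 2 3) mon_superset[OF f]) (use k in \<open>auto simp: lookup_add power_add prod.distrib\<close>)
qed

lemma mon_zero[simp]: "mon s 0 = 1" by (simp add: mon_def)

lemma msubst_superset:
  assumes "finite S" "Poly_Mapping.keys p \<subseteq> S"
  shows "msubst s p = (\<Sum>m\<in>S. mConst (Poly_Mapping.lookup p m) * mon s m)"
  unfolding msubst_def mon_def
  by (rule sum.mono_neutral_left) (use assms in \<open>auto simp: in_keys_iff\<close>)

lemma msubst_add: "msubst s (p + q) = msubst s p + msubst s q"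
proof -
  let ?S = "Poly_Mapping.keys p \<union> Poly_Mapping.keys q \<union> Poly_Mapping.keys (p+q)"
  have f: "finite ?S" by simp
  show ?thesis
    apply (subst (1 2 3) msubst_superset[OF f])
    by (auto simp: lookup_add distrib_right mConst_add sum.distrib)
qed

lemma msubst_zero[simp]: "msubst s 0 = 0" by (simp add: msubst_def)

lemma msubst_single: "msubst s (Poly_Mapping.single m a) = mConst a * mon s m"
  by (subst msubst_superset[of "{m}"]) auto

lemma msubst_mult: "msubst s (p * q) = msubst s p * msubst s q"
proof (induction p rule: pm_induct)
  case zero then show ?case by simp
next
  case (add m a p)
  have "msubst s (Poly_Mapping.single m a * q) = msubst s (Poly_Mapping.single m a) * msubst s q"
  proof (induction q rule: pm_induct)
    case zero then show ?case by simp
  next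
    case (add m' b q)
    then show ?case
      by (simp add: distrib_left msubst_add mult_single msubst_single mon_add mConst_mult algebra_simps)
  qed
  then show ?case using add
    by (simp add: distrib_left distrib_right msubst_add algebra_simps)
qed

lemma msubst_one[simp]: "msubst s 1 = 1"
  using msubst_single[of s 0 1] by simp

interpretation msubst_hom: comm_ring_hom "msubst s"
  by unfold_locales (auto simp: msubst_add msubst_mult)

lemma msubst_mConst[simp]: "msubst s (mConst c) = mConst c"
  by (simp add: mConst_def msubst_single)

lemma msubst_mVar[simp]: "msubst s (mVar v) = s v"
  by (simp add: mVar_def msubst_single mon_def)

lemma mVar_pow: "mVar v ^ k = Poly_Mapping.single (Poly_Mapping.single v k) (1::'a::comm_ring_1)"
  by (induction k) (auto simp: mVar_def mult_single single_add[symmetric] add.commute)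

lemma prod_single1: "finite A \<Longrightarrow> (\<Prod>v\<in>A. Poly_Mapping.single (f v) (1::'a::comm_ring_1)) = Poly_Mapping.single (\<Sum>v\<in>A. f v) 1"
  by (induction A rule: finite_induct) (auto simp: mult_single)

lemma mon_mVar: "mon mVar m = Poly_Mapping.single m (1::'a::comm_ring_1)"
proof -
  have "mon mVar m = Poly_Mapping.single (\<Sum>v\<in>Poly_Mapping.keys m. Poly_Mapping.single v (Poly_Mapping.lookup m v)) (1::'a)"
    unfolding mon_def mVar_pow by (rule prod_single1) simp
  then show ?thesis using pm_expand[of m] by simp
qed

lemma msubst_mVar_id: "msubst mVar p = (p::'a::comm_ring_1 mpoly)"
  unfolding msubst_def
  apply (subst (3) pm_expand[of p])
  using mon_mVar[where 'a='a] by (simp add: mon_def[symmetric] mConst_single)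

lemma single_as_mon: "Poly_Mapping.single m a = mConst a * mon mVar (m::nat\<Rightarrow>\<^sub>0nat) \<and> True"
  by (simp add: mon_mVar mConst_single)

lemma msubst_comp: "msubst s (msubst t p) = msubst (\<lambda>v. msubst s (t v)) p"
proof -
  have "msubst s (msubst t p) = msubst s (\<Sum>m\<in>Poly_Mapping.keys p. mConst (Poly_Mapping.lookup p m) *
      (\<Prod>v\<in>Poly_Mapping.keys m. t v ^ Poly_Mapping.lookup m v))"
    by (simp add: msubst_def[of t])
  also have "\<dots> = msubst (\<lambda>v. msubst s (t v)) p"
    by (simp add: msubst_def[of "\<lambda>v. msubst s (t v)"] msubst_hom.hom_sum msubst_hom.hom_mult msubst_hom.hom_prod msubst_hom.hom_power)
  finally show ?thesis .
qed

lemma msubst_cong: "in_ring n p \<Longrightarrow> (\<And>v. v < n \<Longrightarrow> s v = t v) \<Longrightarrow> msubst s p = msubst t p"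
  unfolding msubst_def in_ring_def
  by (intro sum.cong refl arg_cong2[where f="(*)"] prod.cong) (metis lessThan_iff subsetD)

lemma in_ring_keys: "in_ring n p \<longleftrightarrow> Poly_Mapping.keys p \<subseteq> {m. Poly_Mapping.keys m \<subseteq> {..<n}}"
  unfolding in_ring_def by auto

lemma in_ring_mono: "Poly_Mapping.keys p \<subseteq> Poly_Mapping.keys q \<Longrightarrow> in_ring n q \<Longrightarrow> in_ring n p"
  unfolding in_ring_def by auto

lemma in_ring_0[simp]: "in_ring n 0" by (simp add: in_ring_def)
lemma in_ring_mConst[simp]: "in_ring n (mConst c)" by (simp add: in_ring_def mConst_def)
lemma in_ring_1[simp]: "in_ring n (1::'a::comm_ring_1 mpoly)" using in_ring_mConst[of n "1::'a"] by simp
lemma in_ring_mVar: "v < n \<Longrightarrow> in_ring n (mVar v)" by (simp add: in_ring_def mVar_def)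
lemma in_ring_add: "in_ring n p \<Longrightarrow> in_ring n q \<Longrightarrow> in_ring n (p + q)"
  unfolding in_ring_def using keys_add[of p q] by blast
lemma in_ring_uminus: "in_ring n p \<Longrightarrow> in_ring n (- p)"
  unfolding in_ring_def by simp
lemma in_ring_mult: "in_ring n p \<Longrightarrow> in_ring n q \<Longrightarrow> in_ring n (p * (q::'a::comm_ring_1 mpoly))"
  unfolding in_ring_def using keys_mult[of p q] keys_add
  by (smt (verit, ccfv_threshold) Un_subset_iff mem_Collect_eq subset_iff)
lemma in_ring_sum: "(\<And>x. x \<in> A \<Longrightarrow> in_ring n (f x)) \<Longrightarrow> in_ring n (sum f A)"
  by (induction A rule: infinite_finite_induct) (auto intro: in_ring_add)
lemma in_ring_prod: "(\<And>x. x \<in> A \<Longrightarrow> in_ring n (f x)) \<Longrightarrow> in_ring n (prod f A :: 'a::comm_ring_1 mpoly)"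
  by (induction A rule: infinite_finite_induct) (auto intro: in_ring_mult)
lemma in_ring_power: "in_ring n p \<Longrightarrow> in_ring n (p ^ k :: 'a::comm_ring_1 mpoly)"
  by (induction k) (auto intro: in_ring_mult)
lemma in_ring_of_int[simp]: "in_ring n (of_int k :: 'a::comm_ring_1 mpoly)"
  using in_ring_mConst[of n "of_int k :: 'a"] by (simp add: mConst_def)

lemma in_ring_single: "Poly_Mapping.keys m \<subseteq> {..<n} \<Longrightarrow> in_ring n (Poly_Mapping.single m c)"
  by (simp add: in_ring_def)

lemma in_ring_mpderiv: "in_ring n p \<Longrightarrow> in_ring n (mpderiv i p)"
  unfolding mpderiv_def
proof (rule in_ring_sum)
  fix m assume "in_ring n p" "m \<in> Poly_Mapping.keys p"
  then have "Poly_Mapping.keys m \<subseteq> {..<n}" by (auto simp: in_ring_def)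
  moreover have "Poly_Mapping.keys (m - Poly_Mapping.single i 1) \<subseteq> Poly_Mapping.keys m"
    by (auto simp: in_keys_iff lookup_minus)
  ultimately show "in_ring n (Poly_Mapping.single (m - Poly_Mapping.single i 1)
          (of_nat (Poly_Mapping.lookup m i) * Poly_Mapping.lookup p m))"
    by (intro in_ring_single) blast
qed

lemma in_ring_msubst: "in_ring n p \<Longrightarrow> (\<And>v. v < n \<Longrightarrow> in_ring n (s v)) \<Longrightarrow> in_ring n (msubst s p)"
  unfolding msubst_def
proof (rule in_ring_sum)
  fix m assume a: "in_ring n p" "\<And>v. v < n \<Longrightarrow> in_ring n (s v)" "m \<in> Poly_Mapping.keys p"
  then have "Poly_Mapping.keys m \<subseteq> {..<n}" by (auto simp: in_ring_def)
  then have "in_ring n (\<Prod>v\<in>Poly_Mapping.keys m. s v ^ Poly_Mapping.lookup m v)"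
    using a(2) by (intro in_ring_prod in_ring_power) blast
  then show "in_ring n (mConst (Poly_Mapping.lookup p m) * (\<Prod>v\<in>Poly_Mapping.keys m. s v ^ Poly_Mapping.lookup m v))"
    by (intro in_ring_mult in_ring_mConst)
qed

lemma ring_induct[consumes 1]:
  assumes "in_ring n p"
    and C: "\<And>c. Q (mConst c)"
    and V: "\<And>v. v < n \<Longrightarrow> Q (mVar v)"
    and A: "\<And>p q. Q p \<Longrightarrow> Q q \<Longrightarrow> Q (p + q)"
    and M: "\<And>p q. Q p \<Longrightarrow> Q q \<Longrightarrow> Q (p * (q :: 'a::comm_ring_1 mpoly))"
  shows "Q p"
proof -
  have Q1: "Q 1" using C[of 1] by simp
  have pw: "Q (mVar v ^ k)" if "v < n" for v k
  proof (induction k)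
    case 0 then show ?case using Q1 by simp
  next
    case (Suc k) then show ?case using M[OF V[OF that] Suc] by simp
  qed
  have mon: "Q (mon mVar m)" if "Poly_Mapping.keys m \<subseteq> {..<n}" for m
  proof -
    have "\<And>B. B \<subseteq> Poly_Mapping.keys m \<Longrightarrow> Q (\<Prod>v\<in>B. mVar v ^ Poly_Mapping.lookup m v)"
    proof -
      fix B assume B: "B \<subseteq> Poly_Mapping.keys m"
      have "finite B" by (rule finite_subset[OF B]) simp
      from this B show "Q (\<Prod>v\<in>B. mVar v ^ Poly_Mapping.lookup m v)"
      proof (induction B rule: finite_induct)
        case empty then show ?case using Q1 by simp
      next
        case (insert x F)
        have "x < n" using insert.prems that by blast
        moreover have "Q (\<Prod>v\<in>F. mVar v ^ Poly_Mapping.lookup m v)"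
          using insert.IH insert.prems by simp
        ultimately have "Q (mVar x ^ Poly_Mapping.lookup m x * (\<Prod>v\<in>F. mVar v ^ Poly_Mapping.lookup m v))"
          using pw M by metis
        then show ?case using insert by simp
      qed
    qed
    then show ?thesis unfolding mon_def by simp
  qed
  have "in_ring n p \<longrightarrow> Q p"
  proof (induction p rule: pm_induct)
    case zero then show ?case using C[of 0] by simp
  next
    case (add m a p)
    show ?case
    proof
      assume r: "in_ring n (Poly_Mapping.single m a + p)"
      have k: "Poly_Mapping.keys (Poly_Mapping.single m a + p) = insert m (Poly_Mapping.keys p)"
        using add(1,2) by (auto simp: in_keys_iff lookup_add lookup_single when_def split: if_splits)
      have "in_ring n p" "Poly_Mapping.keys m \<subseteq> {..<n}" using r k unfolding in_ring_def by auto
      then have "Q (mConst a * mon mVar m + p)"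
        using A[OF M[OF C mon] add(3)[rule_format]] by metis
      then show "Q (Poly_Mapping.single m a + p)"
        using single_as_mon[of m a] by simp
    qed
  qed
  then show ?thesis using assms(1) by simp
qed

lemma chain_rule:
  assumes "in_ring n P"
  shows "mpderiv j (msubst s P) = (\<Sum>k<n. msubst s (mpderiv k P) * mpderiv j (s k))"
  using assms
proof (induction P rule: ring_induct)
  case (1 c) then show ?case by simp
next
  case (2 v)
  have "(\<Sum>k<n. msubst s (mpderiv k (mVar v)) * mpderiv j (s k)) = (\<Sum>k<n. if k = v then mpderiv j (s v) else 0)"
    by (rule sum.cong) (auto simp: mpderiv_mVar)
  then show ?case using 2 by simp
next
  case (3 p q)
  then show ?case by (simp add: mpderiv_add msubst_add distrib_right sum.distrib)
next
  case (4 p q)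
  let ?d = "\<lambda>k. mpderiv j (s k)"
  have "(\<Sum>k<n. msubst s (mpderiv k (p * q)) * ?d k)
     = (\<Sum>k<n. (msubst s (mpderiv k p) * ?d k) * msubst s q + msubst s p * (msubst s (mpderiv k q) * ?d k))"
    by (rule sum.cong) (simp_all add: mpderiv_mult msubst_add msubst_mult algebra_simps)
  also have "\<dots> = (\<Sum>k<n. msubst s (mpderiv k p) * ?d k) * msubst s q + msubst s p * (\<Sum>k<n. msubst s (mpderiv k q) * ?d k)"
    by (simp add: sum.distrib sum_distrib_left sum_distrib_right)
  also have "\<dots> = mpderiv j (msubst s (p * q))"
    using 4 by (simp add: mpderiv_mult msubst_mult)
  finally show ?case by simp
qed

lemma mpderiv_pow_zero:
  "(\<forall>m\<in>Poly_Mapping.keys R. Poly_Mapping.lookup m i < k) \<Longrightarrow> (mpderiv i ^^ k) R = (0::'a::comm_ring_1 mpoly)"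
proof (induction k arbitrary: R)
  case 0 then show ?case by auto
next
  case (Suc k)
  have "\<forall>m'\<in>Poly_Mapping.keys (mpderiv i R). Poly_Mapping.lookup m' i < k"
  proof
    fix m' assume "m' \<in> Poly_Mapping.keys (mpderiv i R)"
    then obtain m where m: "m \<in> Poly_Mapping.keys R" and
      "m' \<in> Poly_Mapping.keys (Poly_Mapping.single (m - Poly_Mapping.single i 1)
          (of_nat (Poly_Mapping.lookup m i) * Poly_Mapping.lookup R m :: 'a))"
      using keys_sum[of "\<lambda>m. Poly_Mapping.single (m - Poly_Mapping.single i 1)
          (of_nat (Poly_Mapping.lookup m i) * Poly_Mapping.lookup R m :: 'a)" "Poly_Mapping.keys R"]
      unfolding mpderiv_def by blast
    then have "m' = m - Poly_Mapping.single i 1" "Poly_Mapping.lookup m i \<noteq> 0"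
      by (auto split: if_splits) (metis mult_zero_left of_nat_0 not_gr0)
    then show "Poly_Mapping.lookup m' i < k" using Suc.prems m
      by (auto simp: lookup_minus)
  qed
  then show ?case using Suc.IH by (simp add: funpow_Suc_right del: funpow.simps)
qed

lemma perm_lt: "p permutes {..<n} \<Longrightarrow> l < n \<Longrightarrow> p l < n"
  using permutes_in_image[of p "{..<n}" l] by simp

lemma mdet_cong: "(\<And>i j. i < n \<Longrightarrow> j < n \<Longrightarrow> M i j = N i j) \<Longrightarrow> mdet n M = mdet n N"
  unfolding mdet_def
  by (intro sum.cong refl arg_cong2[where f="(*)"] prod.cong) (auto simp: perm_lt)

lemma mdet_conv: "mdet n M = det (mat n n (\<lambda>(i,j). M i j))"
proof -
  have "det (mat n n (\<lambda>(i,j). M i j)) = (\<Sum>p\<in>{p. p permutes {0..<n}}. signof p * (\<Prod>i=0..<n. mat n n (\<lambda>(i,j). M i j) $$ (i, p i)))"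
    by (rule det_def') simp
  also have "\<dots> = mdet n M"
    unfolding mdet_def atLeast0LessThan
    by (intro sum.cong refl arg_cong2[where f="(*)"] prod.cong) (auto simp: perm_lt)
  finally show ?thesis by simp
qed

lemma msubst_mdet: "msubst s (mdet n M) = mdet n (\<lambda>i j. msubst s (M i j))"
  unfolding mdet_def
  by (simp add: msubst_hom.hom_sum msubst_hom.hom_mult msubst_hom.hom_prod msubst_hom.hom_of_int)

lemma in_ring_mdet: "(\<And>i j. in_ring n' (M i j)) \<Longrightarrow> in_ring n' (mdet n M :: 'a::comm_ring_1 mpoly)"
  unfolding mdet_def by (intro in_ring_sum in_ring_mult in_ring_of_int in_ring_prod) auto

lemma mdet_linear_row:
  assumes "i < n" "finite S"
  shows "mdet n (\<lambda>l j. if l = i then (\<Sum>k\<in>S. c k * N k j) else M l j)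
       = (\<Sum>k\<in>S. c k * mdet n (\<lambda>l j. if l = i then N k j else M l j :: 'a::comm_ring_1))"
proof -
  have i: "i \<in> {..<n}" using assms by simp
  let ?R = "\<lambda>p. (\<Prod>l\<in>{..<n}-{i}. M l (p l))"
  have 1: "(\<Prod>l<n. (if l = i then (\<Sum>k\<in>S. c k * N k (p l)) else M l (p l)))
      = (\<Sum>k\<in>S. c k * N k (p i)) * ?R p" for p
    by (subst prod.remove[OF _ i]) (auto intro!: prod.cong)
  have 2: "(\<Prod>l<n. (if l = i then N k (p l) else M l (p l))) = N k (p i) * ?R p" for p k
    by (subst prod.remove[OF _ i]) (auto intro!: prod.cong)
  show ?thesis
    unfolding mdet_def 1 2
    by (simp add: sum_distrib_left sum_distrib_right mult_ac sum.swap[of _ S])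
qed

lemma mdet_identical:
  assumes "i < n" "k < n" "i \<noteq> k" "\<And>j. j < n \<Longrightarrow> M i j = M k j"
  shows "mdet n M = 0"
  unfolding mdet_conv
  by (rule det_identical_rows[of _ n i k]) (use assms in \<open>auto intro!: eq_vecI\<close>)

lemma mdet_one: "mdet n (\<lambda>i j. if i = j then 1 else 0) = 1"
proof -
  have "mat n n (\<lambda>(i,j). if i = j then 1 else 0) = (1\<^sub>m n :: 'a::comm_ring_1 mat)"
    by (rule eq_matI) auto
  then show ?thesis unfolding mdet_conv by simp
qed

lemma mdet_mult: "mdet n (\<lambda>i j. \<Sum>k<n. A i k * B k j) = mdet n A * mdet n (B :: nat \<Rightarrow> nat \<Rightarrow> 'a::comm_ring_1)"
proof -
  have "mat n n (\<lambda>(i,j). \<Sum>k<n. A i k * B k j) = mat n n (\<lambda>(i,j). A i j) * mat n n (\<lambda>(i,j). B i j)"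
    by (rule eq_matI) (auto simp: scalar_prod_def atLeast0LessThan intro!: sum.cong)
  then show ?thesis unfolding mdet_conv by (simp add: det_mult[of _ n])
qed

theorem lemma4:
  fixes n :: nat and \<Phi> \<Psi> :: "nat \<Rightarrow> 'a::field_char_0 mpoly" and lam :: 'a
  assumes "alg_closed TYPE('a)"
    and "poly_aut_inv n \<Phi> \<Psi>"
    and "lam \<noteq> 0" and "jac n \<Phi> = mConst lam"
  defines "\<delta> \<equiv> \<lambda>i P. mConst (inverse lam) * mpderiv i P"
    and "\<Delta> \<equiv> \<lambda>i P. jac n (\<Psi>(i := P))"
  shows "(\<forall>i<n. \<forall>P. in_ring n P \<longrightarrow>
            \<Delta> i (msubst \<Psi> P) = msubst \<Psi> (\<delta> i P) \<and>
            msubst \<Phi> (\<Delta> i P) = \<delta> i (msubst \<Phi> P))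
       \<and> (\<forall>i<n. \<forall>P. in_ring n P \<longrightarrow> (\<exists>k. (\<Delta> i ^^ k) P = 0))"
proof -
  have R\<Phi>: "\<And>i. i < n \<Longrightarrow> in_ring n (\<Phi> i)" and R\<Psi>: "\<And>i. i < n \<Longrightarrow> in_ring n (\<Psi> i)"
    and inv1: "\<And>i. i < n \<Longrightarrow> msubst \<Phi> (\<Psi> i) = mVar i"
    and inv2: "\<And>i. i < n \<Longrightarrow> msubst \<Psi> (\<Phi> i) = mVar i"
    using assms(2) unfolding poly_aut_inv_def by auto
  have back1: "msubst \<Phi> (msubst \<Psi> R) = R" if "in_ring n R" for R
  proof -
    have "msubst \<Phi> (msubst \<Psi> R) = msubst (\<lambda>v. msubst \<Phi> (\<Psi> v)) R" by (rule msubst_comp)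
    also have "\<dots> = msubst mVar R" by (rule msubst_cong[OF that]) (simp add: inv1)
    finally show ?thesis by (simp add: msubst_mVar_id)
  qed
  have back2: "msubst \<Psi> (msubst \<Phi> R) = R" if "in_ring n R" for R
  proof -
    have "msubst \<Psi> (msubst \<Phi> R) = msubst (\<lambda>v. msubst \<Psi> (\<Phi> v)) R" by (rule msubst_comp)
    also have "\<dots> = msubst mVar R" by (rule msubst_cong[OF that]) (simp add: inv2)
    finally show ?thesis by (simp add: msubst_mVar_id)
  qed
  have jac\<Psi>: "jac n \<Psi> = mConst (inverse lam)"
  proof -
    have "jac n (\<lambda>i. msubst \<Psi> (\<Phi> i)) = mdet n (\<lambda>i j. if i = j then 1 else 0)"
      unfolding jac_def by (rule mdet_cong) (simp add: inv2 mpderiv_mVar)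
    then have e1: "jac n (\<lambda>i. msubst \<Psi> (\<Phi> i)) = 1" by (simp add: mdet_one)
    have "jac n (\<lambda>i. msubst \<Psi> (\<Phi> i)) = mdet n (\<lambda>i j. \<Sum>k<n. msubst \<Psi> (mpderiv k (\<Phi> i)) * mpderiv j (\<Psi> k))"
      unfolding jac_def by (rule mdet_cong) (simp add: chain_rule R\<Phi>)
    also have "\<dots> = mdet n (\<lambda>i k. msubst \<Psi> (mpderiv k (\<Phi> i))) * jac n \<Psi>"
      unfolding jac_def by (rule mdet_mult)
    also have "\<dots> = mConst lam * jac n \<Psi>"
      using assms(4) by (simp add: msubst_mdet[symmetric] jac_def[symmetric])
    finally have "mConst lam * jac n \<Psi> = 1" using e1 by simp
    then have "mConst (inverse lam) * (mConst lam * jac n \<Psi>) = mConst (inverse lam)" by simp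
    then show ?thesis using assms(3) by (simp add: mult.assoc[symmetric] mConst_mult[symmetric])
  qed
  have in_ring_\<delta>: "in_ring n (\<delta> i R)" if "in_ring n R" for i R
    unfolding \<delta>_def using that by (simp add: in_ring_mult in_ring_mpderiv)
  have A1: "\<Delta> i (msubst \<Psi> P) = msubst \<Psi> (\<delta> i P)" if i: "i < n" and P: "in_ring n P" for i P
  proof -
    define c where "c k = msubst \<Psi> (mpderiv k P)" for k
    define N where "N k j = mpderiv j (\<Psi> k)" for k j
    have "\<Delta> i (msubst \<Psi> P) = mdet n (\<lambda>l j. if l = i then (\<Sum>k<n. c k * N k j) else N l j)"
      unfolding \<Delta>_def jac_def by (rule mdet_cong) (simp add: chain_rule[OF P] c_def N_def mult.commute)
    also have "\<dots> = (\<Sum>k<n. c k * mdet n (\<lambda>l j. if l = i then N k j else N l j))"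
      by (rule mdet_linear_row) (use i in auto)
    also have "\<dots> = (\<Sum>k<n. if k = i then c i * jac n \<Psi> else 0)"
    proof (rule sum.cong)
      fix k assume k: "k \<in> {..<n}"
      show "c k * mdet n (\<lambda>l j. if l = i then N k j else N l j) = (if k = i then c i * jac n \<Psi> else 0)"
      proof (cases "k = i")
        case True
        have "(\<lambda>l j. if l = i then N k j else N l j) = (\<lambda>l j. mpderiv j (\<Psi> l))"
          using True by (auto simp: N_def fun_eq_iff)
        then show ?thesis using True by (simp add: jac_def)
      next
        case False
        have "mdet n (\<lambda>l j. if l = i then N k j else N l j) = 0"
          by (rule mdet_identical[of i n k]) (use i k False in auto)
        then show ?thesis using False by simp
      qed
    qed simp
    also have "\<dots> = c i * mConst (inverse lam)" using i jac\<Psi> by simp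
    finally show ?thesis by (simp add: \<delta>_def c_def msubst_mult mult.commute)
  qed
  have key: "\<Delta> i P = msubst \<Psi> (\<delta> i (msubst \<Phi> P))" if i: "i < n" and P: "in_ring n P" for i P
  proof -
    have Q: "in_ring n (msubst \<Phi> P)" by (rule in_ring_msubst[OF P R\<Phi>])
    have "\<Delta> i P = \<Delta> i (msubst \<Psi> (msubst \<Phi> P))" using back2[OF P] by simp
    also have "\<dots> = msubst \<Psi> (\<delta> i (msubst \<Phi> P))" by (rule A1[OF i Q])
    finally show ?thesis .
  qed
  have part1: "\<Delta> i (msubst \<Psi> P) = msubst \<Psi> (\<delta> i P) \<and> msubst \<Phi> (\<Delta> i P) = \<delta> i (msubst \<Phi> P)"
    if i: "i < n" and P: "in_ring n P" for i P
  proof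
    show "\<Delta> i (msubst \<Psi> P) = msubst \<Psi> (\<delta> i P)" by (rule A1[OF i P])
    have Q: "in_ring n (msubst \<Phi> P)" by (rule in_ring_msubst[OF P R\<Phi>])
    show "msubst \<Phi> (\<Delta> i P) = \<delta> i (msubst \<Phi> P)"
      using key[OF i P] back1[OF in_ring_\<delta>[OF Q]] by simp
  qed
  have part2: "\<exists>k. (\<Delta> i ^^ k) P = 0" if i: "i < n" and P: "in_ring n P" for i P
  proof -
    define Q where "Q = msubst \<Phi> P"
    have Q: "in_ring n Q" unfolding Q_def by (rule in_ring_msubst[OF P R\<Phi>])
    have rk: "in_ring n ((\<delta> i ^^ k) Q)" for k
      by (induction k) (auto simp: Q in_ring_\<delta>)
    have it: "(\<Delta> i ^^ k) P = msubst \<Psi> ((\<delta> i ^^ k) Q)" for k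
    proof (induction k)
      case 0 then show ?case using back2[OF P] by (simp add: Q_def)
    next
      case (Suc k)
      then show ?case using A1[OF i rk[of k]] by simp
    qed
    have dk: "(\<delta> i ^^ k) Q = mConst (inverse lam ^ k) * (mpderiv i ^^ k) Q" for k
      by (induction k) (auto simp: \<delta>_def mpderiv_mConst_mult mConst_mult mult.assoc)
    define K where "K = Suc (\<Sum>m\<in>Poly_Mapping.keys Q. Poly_Mapping.lookup m i)"
    have "\<forall>m\<in>Poly_Mapping.keys Q. Poly_Mapping.lookup m i < K"
      unfolding K_def using member_le_sum[of _ "Poly_Mapping.keys Q" "\<lambda>m. Poly_Mapping.lookup m i"]
      by (simp add: le_imp_less_Suc)
    then have "(mpderiv i ^^ K) Q = 0" by (rule mpderiv_pow_zero)
    then have "(\<Delta> i ^^ K) P = 0" using it[of K] dk[of K] by simp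
    then show ?thesis by blast
  qed
  show ?thesis using part1 part2 by blast
qed

end
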